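(* Let $G$ be a finite graph with a self-loop on every vertex, let $v$ be a vertex of $G$, and let $w_i\neq w_j$ be two distinct neighbours of $v$ (both different from $v$). Let $C_v$ be the number of vertex-disjoint directed cycle covers of $G$ in which $v$ lies on a cycle of length 1 (equivalently $C_v=C(G-\{v\})$), and let $C_{w_ivw_j}$ be the number of vertex-disjoint directed cycle covers of $G$ containing the directed edges $w_i\to v$ and $v\to w_j$. Then $$\left(C_{w_ivw_j}\right)^2\le \frac14\left(C_v\right)^2.$$
   Context: A vertex-disjoint directed cycle cover of a finite graph $H$ (with a self-loop at every vertex) is a collection of vertex-disjoint directed cycles covering all vertices, where cycles of every positive length are allowed: length 1 means a vertex with its loop, and length 2 means two adjacent vertices using their edge in both directions. Equivalently it is a permutation $\sigma$ of the vertices with $\sigma(u)=u$ or $\sigma(u)$ adjacent to $u$ for all $u$; it contains the directed edge $x\to y$ iff $\sigma(x)=y$. $C(H)$ denotes the number of such covers, and $G-\{v\}$ is $G$ with $v$ deleted. *)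

theory Defs
  imports "HOL-Analysis.Analysis"
begin

text \<open>A finite graph on vertex set V with symmetric adjacency relation E; every vertex
carries a self-loop (modelled by allowing fixed points).\<close>

definition cycle_covers :: "'a set \<Rightarrow> ('a \<Rightarrow> 'a \<Rightarrow> bool) \<Rightarrow> ('a \<Rightarrow> 'a) set" where
  "cycle_covers V E = {\<sigma>. \<sigma> permutes V \<and> (\<forall>u\<in>V. \<sigma> u = u \<or> E u (\<sigma> u))}"

end

theory Submission
  imports Defs "HOL-Combinatorics.Cycles"
begin

lemma cyc_seq:
  assumes "distinct (map z [0..<n])" "k < n"
  shows "cycle_of_list (map z [0..<n]) (z k) = z (Suc k mod n)"
proof -
  let ?cs = "map z [0..<n]"
  have "map (cycle_of_list ?cs) ?cs = rotate1 ?cs"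
    using cyclic_rotation[OF assms(1), of 1] by simp
  then have "map (cycle_of_list ?cs) ?cs ! k = rotate1 ?cs ! k" by simp
  then show ?thesis using assms(2)
    by (simp add: nth_rotate1)
qed

definition Phi :: "'a \<Rightarrow> 'a \<Rightarrow> 'a \<Rightarrow> ('a \<Rightarrow> 'a) \<times> ('a \<Rightarrow> 'a) \<Rightarrow> ('a \<Rightarrow> 'a) \<times> ('a \<Rightarrow> 'a)" where
  "Phi v a b pr = (let p = fst pr \<circ> Transposition.transpose b v; q = snd pr \<circ> Transposition.transpose a v;
      \<pi> = inv q \<circ> p; x = (\<lambda>k. (\<pi> ^^ k) b);
      m = (LEAST k. 0 < k \<and> x k \<in> {a, b}); cI = (x m = b);
      L0 = map x [0..<m];
      L1 = map (\<lambda>k. if k = 0 then a else x k) [0..<(if cI then Suc m else m)]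
    in (q \<circ> cycle_of_list L1, p \<circ> inv (cycle_of_list L0)))"

definition Dec :: "'a \<Rightarrow> 'a \<Rightarrow> 'a \<Rightarrow> ('a \<Rightarrow> 'a) \<times> ('a \<Rightarrow> 'a) \<Rightarrow> ('a \<Rightarrow> 'a) \<times> ('a \<Rightarrow> 'a)" where
  "Dec v a b pr = (let t1 = fst pr; t2 = snd pr; \<psi> = inv t2 \<circ> t1;
      m = (LEAST k. 0 < k \<and> (\<psi> ^^ k) a = b);
      x = (\<lambda>k. if k = 0 then b else (\<psi> ^^ k) a);
      cI = (t1 b = b);
      L0 = map x [0..<m];
      L1 = map (\<lambda>k. if k = 0 then a else x k) [0..<(if cI then Suc m else m)];
      p = t2 \<circ> cycle_of_list L0; q = t1 \<circ> inv (cycle_of_list L1)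
    in (p \<circ> Transposition.transpose b v, q \<circ> Transposition.transpose a v))"

lemma key:
  assumes fin: "finite V"
    and vV: "v \<in> V" and aV: "a \<in> V" and bV: "b \<in> V"
    and av: "a \<noteq> v" and bv: "b \<noteq> v" and ab: "a \<noteq> b"
    and sC: "\<sigma> \<in> cycle_covers V E" and sb: "\<sigma> b = v" and sv: "\<sigma> v = a"
    and tC: "\<sigma>' \<in> cycle_covers V E" and ta: "\<sigma>' a = v" and tv: "\<sigma>' v = b"
  shows "fst (Phi v a b (\<sigma>, \<sigma>')) \<in> {\<tau> \<in> cycle_covers V E. \<tau> v = v \<and> \<tau> a = a}"
    and "snd (Phi v a b (\<sigma>, \<sigma>')) \<in> {\<tau> \<in> cycle_covers V E. \<tau> v = v \<and> \<tau> a \<noteq> a}"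
    and "Dec v a b (Phi v a b (\<sigma>, \<sigma>')) = (\<sigma>, \<sigma>')"
proof -
  have sP: "\<sigma> permutes V" and sE: "\<And>u. u \<in> V \<Longrightarrow> \<sigma> u = u \<or> E u (\<sigma> u)"
    using sC by (auto simp: cycle_covers_def)
  have tP: "\<sigma>' permutes V" and tE: "\<And>u. u \<in> V \<Longrightarrow> \<sigma>' u = u \<or> E u (\<sigma>' u)"
    using tC by (auto simp: cycle_covers_def)
  define p where "p = \<sigma> \<circ> Transposition.transpose b v"
  define q where "q = \<sigma>' \<circ> Transposition.transpose a v"
  define \<pi> where "\<pi> = inv q \<circ> p"
  define x where "x = (\<lambda>k. (\<pi> ^^ k) b)"
  define m where "m = (LEAST k. 0 < k \<and> x k \<in> {a, b})"
  define cI where "cI = (x m = b)"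
  define n1 where "n1 = (if cI then Suc m else m)"
  define z where "z = (\<lambda>k. if k = 0 then a else x k)"
  define L0 where "L0 = map x [0..<m]"
  define L1 where "L1 = map z [0..<n1]"
  define c0 where "c0 = cycle_of_list L0"
  define c1 where "c1 = cycle_of_list L1"
  define \<tau> where "\<tau> = p \<circ> inv c0"
  define \<tau>' where "\<tau>' = q \<circ> c1"
  have Phi_eq: "Phi v a b (\<sigma>, \<sigma>') = (\<tau>', \<tau>)"
    unfolding Phi_def Let_def fst_conv snd_conv \<tau>_def \<tau>'_def c0_def c1_def L0_def L1_def z_def n1_def cI_def m_def
      x_def \<pi>_def p_def q_def by (rule refl)
  have pP: "p permutes V" unfolding p_def
    by (rule permutes_compose[OF permutes_swap_id[OF bV vV] sP])
  have qP: "q permutes V" unfolding q_def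
    by (rule permutes_compose[OF permutes_swap_id[OF aV vV] tP])
  have pb: "p b = a" and pv: "p v = v" and po: "\<And>u. u \<noteq> b \<Longrightarrow> u \<noteq> v \<Longrightarrow> p u = \<sigma> u"
    using sb sv by (auto simp: p_def)
  have qa: "q a = b" and qv: "q v = v" and qo: "\<And>u. u \<noteq> a \<Longrightarrow> u \<noteq> v \<Longrightarrow> q u = \<sigma>' u"
    using ta tv by (auto simp: q_def)
  have piP: "\<pi> permutes V" unfolding \<pi>_def
    by (rule permutes_compose[OF pP permutes_inv[OF qP]])
  have piv: "\<pi> v = v" unfolding \<pi>_def using pv qv permutes_inverses[OF qP]
    by (metis comp_apply)
  have qx: "\<And>k. q (x (Suc k)) = p (x k)"
    unfolding x_def \<pi>_def by (simp add: permutes_inverses[OF qP])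
  have xV: "\<And>k. x k \<in> V"
    unfolding x_def using permutes_in_image[OF permutes_funpow[OF piP]] bV by blast
  have pivk: "\<And>k. (\<pi> ^^ k) v = v" 
  proof -
    fix k show "(\<pi> ^^ k) v = v" by (induct k) (simp_all add: piv)
  qed
  have xnv: "\<And>k. x k \<noteq> v"
  proof
    fix k assume "x k = v"
    then have "(\<pi> ^^ k) b = (\<pi> ^^ k) v" using pivk unfolding x_def by simp
    then have "b = v" using permutes_inj[OF permutes_funpow[OF piP]] by (meson injD)
    then show False using bv by simp
  qed
  have x0: "x 0 = b" by (simp add: x_def)
  have permpi: "permutation \<pi>" using piP fin permutation_permutes by blast
  obtain n where n: "(\<pi> ^^ n) = id" "n > 0" using permutation_is_nilpotent[OF permpi] by blast
  have exk: "\<exists>k. 0 < k \<and> x k \<in> {a, b}" using n by (auto simp: x_def intro!: exI[of _ n])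
  have m0: "0 < m" and xm: "x m \<in> {a, b}"
    using LeastI_ex[OF exk] unfolding m_def by auto
  have xlt: "\<And>k. 0 < k \<Longrightarrow> k < m \<Longrightarrow> x k \<notin> {a, b}"
    using not_less_Least unfolding m_def by blast
  have xm_cases: "cI \<or> x m = a" using xm cI_def by auto
  have injpi: "inj \<pi>" using permutes_inj[OF piP] .
  have xdist: "\<And>i j. i < m \<Longrightarrow> j < m \<Longrightarrow> x i = x j \<Longrightarrow> i = j"
  proof -
    have A: "\<And>i j. i < j \<Longrightarrow> j < m \<Longrightarrow> x i = x j \<Longrightarrow> False"
    proof -
      fix i j assume ij: "i < j" "j < m" "x i = x j"
      then have "(\<pi> ^^ (j - i)) b = b"
        using funpow_diff[OF injpi, of i j b] unfolding x_def by simp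
      then have "x (j - i) = b" by (simp add: x_def)
      moreover have "0 < j - i" "j - i < m" using ij by linarith+
      ultimately show False using xlt[of "j - i"] by auto
    qed
    fix i j assume "i < m" "j < m" "x i = x j"
    then show "i = j" using A[of i j] A[of j i] by (metis linorder_neqE_nat)
  qed
  have m2: "\<not> cI \<Longrightarrow> 2 \<le> m"
  proof (rule ccontr)
    assume nc: "\<not> cI" and "\<not> 2 \<le> m"
    then have m1: "m = 1" using m0 by simp
    then have "x 1 = a" using xm_cases nc by simp
    then have "q a = a" using qx[of 0] x0 pb by simp
    then show False using qa ab by simp
  qed
  have n1ge: "2 \<le> n1" using m2 m0 unfolding n1_def by (cases cI) auto
  have xm_b: "cI \<Longrightarrow> x m = b" using cI_def by simp
  have xm_a: "\<not> cI \<Longrightarrow> x m = a" using xm_cases by auto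
  have L0d: "distinct L0" unfolding L0_def distinct_map using xdist
    by (auto simp: inj_on_def)
  have zdist: "\<And>i j. i < n1 \<Longrightarrow> j < n1 \<Longrightarrow> z i = z j \<Longrightarrow> i = j"
  proof -
    have zk: "\<And>k. 0 < k \<Longrightarrow> k < n1 \<Longrightarrow> z k = x k \<and> z k \<noteq> a"
    proof -
      fix k assume k: "0 < k" "k < n1"
      show "z k = x k \<and> z k \<noteq> a"
      proof (cases "k < m")
        case True then show ?thesis using xlt[of k] k z_def by auto
      next
        case False then have "cI" "k = m" using k n1_def by (auto split: if_splits)
        then show ?thesis using xm_b ab z_def k by auto
      qed
    qed
    have xx: "\<And>i j. 0 < i \<Longrightarrow> i < j \<Longrightarrow> j < n1 \<Longrightarrow> x i = x j \<Longrightarrow> False"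
    proof -
      fix i j assume ij: "0 < i" "i < j" "j < n1" "x i = x j"
      show False
      proof (cases "j < m")
        case True then show False using xdist[of i j] ij by auto
      next
        case False then have "cI" "j = m" using ij n1_def by (auto split: if_splits)
        then have "x i = b" using ij xm_b by simp
        then show False using xlt[of i] ij \<open>j = m\<close> by auto
      qed
    qed
    fix i j assume ij: "i < n1" "j < n1" "z i = z j"
    show "i = j"
    proof (cases "i = 0 \<or> j = 0")
      case True then show ?thesis using zk ij z_def by (metis neq0_conv)
    next
      case False then show ?thesis using zk[of i] zk[of j] xx[of i j] xx[of j i] ij
        by (metis linorder_neqE_nat neq0_conv)
    qed
  qed
  have L1d: "distinct L1" unfolding L1_def distinct_map using zdist
    by (auto simp: inj_on_def)
  have zV: "\<And>k. z k \<in> V" using xV aV z_def by auto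
  have L0V: "set L0 \<subseteq> V" using xV L0_def by auto
  have L1V: "set L1 \<subseteq> V" using zV L1_def by auto
  have c0P: "c0 permutes V" unfolding c0_def using permutes_subset[OF cycle_permutes L0V] .
  have c1P: "c1 permutes V" unfolding c1_def using permutes_subset[OF cycle_permutes L1V] .
  have tauP: "\<tau> permutes V" unfolding \<tau>_def by (rule permutes_compose[OF permutes_inv[OF c0P] pP])
  have tau'P: "\<tau>' permutes V" unfolding \<tau>'_def by (rule permutes_compose[OF c1P qP])
  have c0x: "\<And>k. k < m \<Longrightarrow> c0 (x k) = x (Suc k mod m)"
    unfolding c0_def L0_def using cyc_seq L0d L0_def by metis
  have c1z: "\<And>k. k < n1 \<Longrightarrow> c1 (z k) = z (Suc k mod n1)"
    unfolding c1_def L1_def using cyc_seq L1d L1_def by metis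
  have c0o: "\<And>u. u \<notin> set L0 \<Longrightarrow> c0 u = u" unfolding c0_def by (rule id_outside_supp)
  have c1o: "\<And>u. u \<notin> set L1 \<Longrightarrow> c1 u = u" unfolding c1_def by (rule id_outside_supp)
  have tauc0: "\<And>y. \<tau> (c0 y) = p y" unfolding \<tau>_def by (simp add: permutes_inverses[OF c0P])
  have tauo: "\<And>u. u \<notin> set L0 \<Longrightarrow> \<tau> u = p u" using tauc0 c0o by metis
  have tau'o: "\<And>u. u \<notin> set L1 \<Longrightarrow> \<tau>' u = q u" using c1o \<tau>'_def by simp
  have aL0: "a \<notin> set L0"
  proof
    assume "a \<in> set L0"
    then obtain k where k: "k < m" "x k = a" unfolding L0_def by auto
    show False
    proof (cases "k = 0")
      case True then show False using k x0 ab by simp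
    next
      case False then show False using xlt[of k] k by simp
    qed
  qed
  have vL0: "v \<notin> set L0" using xnv L0_def by auto
  have vL1: "v \<notin> set L1" using xnv av L1_def z_def by auto
  have bL0: "b \<in> set L0" using x0 m0 L0_def by auto
  have T1: "\<And>k. k < m \<Longrightarrow> (Suc k < m \<or> cI) \<Longrightarrow> \<tau> (x (Suc k)) = p (x k)"
  proof -
    fix k assume k: "k < m" "Suc k < m \<or> cI"
    have "c0 (x k) = x (Suc k)"
    proof (cases "Suc k < m")
      case True then show ?thesis using c0x[OF k(1)] by simp
    next
      case False then have "Suc k = m" "cI" using k by auto
      then show ?thesis using c0x[OF k(1)] x0 xm_b by simp
    qed
    then show "\<tau> (x (Suc k)) = p (x k)" using tauc0 by metis
  qed
  have T2: "\<not> cI \<Longrightarrow> \<tau> b = b"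
  proof -
    assume nc: "\<not> cI"
    have "c0 (x (m - 1)) = b" using c0x[of "m - 1"] m0 x0 by simp
    then have "\<tau> b = p (x (m - 1))" using tauc0 by metis
    also have "\<dots> = q (x m)" using qx[of "m - 1"] m0 by simp
    also have "\<dots> = b" using xm_a[OF nc] qa by simp
    finally show ?thesis .
  qed
  have z1: "z 1 = x 1" by (simp add: z_def)
  have T3: "\<tau>' a = a"
  proof -
    have "c1 a = x 1" using c1z[of 0] n1ge z_def by simp
    then show ?thesis using \<tau>'_def qx[of 0] x0 pb by simp
  qed
  have T4: "\<And>k. 0 < k \<Longrightarrow> k < m \<Longrightarrow> \<tau>' (x k) = p (x k)"
  proof -
    fix k assume k: "0 < k" "k < m"
    have kn: "k < n1" using k n1_def by auto
    have "c1 (x k) = x (Suc k)"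
    proof (cases cI)
      case True then show ?thesis using c1z[OF kn] k n1_def z_def by simp
    next
      case False
      show ?thesis
      proof (cases "Suc k < m")
        case True then show ?thesis using c1z[OF kn] k n1_def z_def False by simp
      next
        case F2: False then have "Suc k = m" using k by simp
        then show ?thesis using c1z[OF kn] k n1_def z_def False xm_a by simp
      qed
    qed
    then show "\<tau>' (x k) = p (x k)" using \<tau>'_def qx by simp
  qed
  have T5: "cI \<Longrightarrow> \<tau>' b = b"
  proof -
    assume c: cI
    have "c1 (z m) = z 0" using c1z[of m] c n1_def by simp
    then have "c1 b = a" using c xm_b m0 z_def by simp
    then show ?thesis using \<tau>'_def qa by simp
  qed
  have T6: "\<not> cI \<Longrightarrow> \<tau>' b \<noteq> b"
  proof -
    assume nc: "\<not> cI"
    have "b \<notin> set L1"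
    proof
      assume "b \<in> set L1"
      then obtain k where k: "k < m" "z k = b" using nc unfolding L1_def n1_def by auto
      show False
      proof (cases "k = 0")
        case True then show False using k ab z_def by simp
      next
        case False then show False using xlt[of k] k z_def by simp
      qed
    qed
    then have "\<tau>' b = \<sigma>' b" using tau'o qo ab bv by simp
    moreover have "\<sigma>' b \<noteq> b" using tv bv permutes_inj[OF tP] by (metis injD)
    ultimately show ?thesis by simp
  qed
  show "fst (Phi v a b (\<sigma>, \<sigma>')) \<in> {\<tau> \<in> cycle_covers V E. \<tau> v = v \<and> \<tau> a = a}"
  proof -
    have "\<tau>' v = v" using tau'o[OF vL1] qv by simp
    moreover have "\<forall>u\<in>V. \<tau>' u = u \<or> E u (\<tau>' u)"
    proof
      fix u assume uV: "u \<in> V"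
      show "\<tau>' u = u \<or> E u (\<tau>' u)"
      proof (cases "u \<in> set L1")
        case False
        then have "u \<noteq> a" using n1ge L1_def z_def by force
        then show ?thesis using tau'o[OF False] qo qv tE[OF uV] by (cases "u = v") auto
      next
        case True
        then obtain k where k: "k < n1" "u = z k" unfolding L1_def by auto
        show ?thesis
        proof (cases "k = 0")
          case True then show ?thesis using k T3 z_def by simp
        next
          case False
          show ?thesis
          proof (cases "k < m")
            case True
            then have "\<tau>' u = \<sigma> (x k)" using T4[of k] False k z_def po[of "x k"] xlt[of k] xnv
              by auto
            then show ?thesis using sE[of u] uV k z_def False by simp
          next
            case F2: False
            then have "cI" "k = m" using k n1_def by (auto split: if_splits)
            then show ?thesis using T5 k z_def xm_b False by simp
          qed
        qed
      qed
    qed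
    ultimately show ?thesis using Phi_eq tau'P T3 by (simp add: cycle_covers_def)
  qed
  show "snd (Phi v a b (\<sigma>, \<sigma>')) \<in> {\<tau> \<in> cycle_covers V E. \<tau> v = v \<and> \<tau> a \<noteq> a}"
  proof -
    have "\<tau> v = v" using tauo[OF vL0] pv by simp
    moreover have "\<tau> a \<noteq> a"
    proof -
      have "\<tau> a = \<sigma> a" using tauo[OF aL0] po ab av by simp
      moreover have "\<sigma> a \<noteq> a" using sv av permutes_inj[OF sP] by (metis injD)
      ultimately show ?thesis by simp
    qed
    moreover have "\<forall>u\<in>V. \<tau> u = u \<or> E u (\<tau> u)"
    proof
      fix u assume uV: "u \<in> V"
      define y where "y = inv c0 u"
      have uy: "u = c0 y" using permutes_inverses[OF c0P] y_def by simp
      have tu: "\<tau> u = p y" using tauc0 uy by simp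
      show "\<tau> u = u \<or> E u (\<tau> u)"
      proof (cases "y \<in> set L0")
        case False
        then have "u = y" using c0o uy by simp
        moreover have "u \<noteq> b" using False bL0 \<open>u = y\<close> by auto
        ultimately show ?thesis using tu po pv sE[OF uV] by (cases "u = v") auto
      next
        case True
        then obtain k where k: "k < m" "y = x k" unfolding L0_def by auto
        show ?thesis
        proof (cases "Suc k < m")
          case True
          then have ux: "u = x (Suc k)" using c0x[OF k(1)] uy k by simp
          have "\<tau> u = q u" using tu k qx ux by simp
          also have "\<dots> = \<sigma>' u" using qo xlt[of "Suc k"] True xnv ux by simp
          finally show ?thesis using tE[OF uV] by simp
        next
          case False
          then have km: "Suc k = m" using k by simp
          then have ub: "u = b" using c0x[OF k(1)] uy k x0 by simp
          have tq: "\<tau> u = q (x m)" using tu k qx km by metis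
          show ?thesis
          proof (cases cI)
            case True
            then have "\<tau> u = \<sigma>' u" using tq xm_b qo ab bv ub by simp
            then show ?thesis using tE[OF uV] by simp
          next
            case False
            then show ?thesis using tq xm_a qa ub by simp
          qed
        qed
      qed
    qed
    ultimately show ?thesis using Phi_eq tauP by (simp add: cycle_covers_def)
  qed
  show "Dec v a b (Phi v a b (\<sigma>, \<sigma>')) = (\<sigma>, \<sigma>')"
  proof -
    define \<psi> where "\<psi> = inv \<tau> \<circ> \<tau>'"
    have pstep: "\<And>y w. \<tau> w = \<tau>' y \<Longrightarrow> \<psi> y = w"
      unfolding \<psi>_def using permutes_inverses[OF tauP] by (metis comp_apply)
    have D1: "\<And>k. 1 \<le> k \<Longrightarrow> k \<le> m \<Longrightarrow> (\<psi> ^^ k) a = (if k < m then x k else b)"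
    proof -
      fix k show "1 \<le> k \<Longrightarrow> k \<le> m \<Longrightarrow> (\<psi> ^^ k) a = (if k < m then x k else b)"
      proof (induct k)
        case 0 then show ?case by simp
      next
        case (Suc k)
        show ?case
        proof (cases "k = 0")
          case True
          have "\<tau> (if 1 < m then x 1 else b) = \<tau>' a"
          proof (cases "1 < m")
            case True then show ?thesis using T1[of 0] T3 x0 pb by simp
          next
            case False
            then have "m = 1" using m0 by simp
            then have "cI" using m2 by force
            then show ?thesis using T1[of 0] T3 x0 pb \<open>m = 1\<close> xm_b by simp
          qed
          then show ?thesis using pstep True by simp
        next
          case False
          then have IH: "(\<psi> ^^ k) a = x k" using Suc by simp
          have km: "k < m" using Suc by simp
          have "\<tau> (if Suc k < m then x (Suc k) else b) = \<tau>' (x k)"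
          proof (cases "Suc k < m")
            case True then show ?thesis using T1[of k] T4[of k] False km by simp
          next
            case F2: False
            then have skm: "Suc k = m" using Suc by simp
            show ?thesis
            proof (cases cI)
              case True then show ?thesis using T1[of k] T4[of k] False km skm xm_b by simp
            next
              case F3: False
              have "\<tau>' (x k) = p (x k)" using T4[of k] False km by simp
              also have "\<dots> = q (x (Suc k))" using qx by simp
              also have "\<dots> = q (x m)" using skm by simp
              also have "\<dots> = b" using xm_a[OF F3] qa by simp
              finally show ?thesis using T2[OF F3] F2 by simp
            qed
          qed
          then show ?thesis using pstep IH by simp
        qed
      qed
    qed
    have D2: "(LEAST k. 0 < k \<and> (\<psi> ^^ k) a = b) = m"
    proof (rule Least_equality)
      show "0 < m \<and> (\<psi> ^^ m) a = b" using D1[of m] m0 by simp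
      fix k assume k: "0 < k \<and> (\<psi> ^^ k) a = b"
      show "m \<le> k"
      proof (rule ccontr)
        assume "\<not> m \<le> k"
        then have "(\<psi> ^^ k) a = x k" using D1[of k] k by simp
        then show False using xlt[of k] k \<open>\<not> m \<le> k\<close> by simp
      qed
    qed
    have D3: "map (\<lambda>k. if k = 0 then b else (\<psi> ^^ k) a) [0..<m] = L0"
      unfolding L0_def using D1 x0 by (auto intro!: map_cong)
    have D4: "(\<tau>' b = b) = cI" using T5 T6 by blast
    have D5: "map (\<lambda>k. if k = 0 then a else (if k = 0 then b else (\<psi> ^^ k) a)) [0..<n1] = L1"
      unfolding L1_def
    proof (rule map_cong)
      fix k assume "k \<in> set [0..<n1]"
      then have k: "k < n1" by simp
      show "(if k = 0 then a else (if k = 0 then b else (\<psi> ^^ k) a)) = z k"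
      proof (cases "k = 0")
        case True then show ?thesis by (simp add: z_def)
      next
        case False
        have "k \<le> m" using k n1_def by (auto split: if_splits)
        then have "(\<psi> ^^ k) a = x k" using D1[of k] False xm_b k n1_def
          by (cases "k < m") (auto split: if_splits)
        then show ?thesis using False z_def by simp
      qed
    qed simp
    have E1: "\<tau> \<circ> c0 = p" using tauc0 by (simp add: fun_eq_iff)
    have E2: "\<tau>' \<circ> inv c1 = q" unfolding \<tau>'_def
      by (simp add: fun_eq_iff permutes_inverses[OF c1P])
    have E3: "p \<circ> Transposition.transpose b v = \<sigma>" unfolding p_def by (simp add: fun_eq_iff)
    have E4: "q \<circ> Transposition.transpose a v = \<sigma>'" unfolding q_def by (simp add: fun_eq_iff)
    show ?thesis
      unfolding Phi_eq Dec_def Let_def fst_conv snd_conv \<psi>_def[symmetric] D2 D3 D4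
      unfolding n1_def[symmetric] D5 c0_def[symmetric] c1_def[symmetric] E1 E2 E3 E4 ..
  qed
qed


lemma inv_cover:
  assumes sym: "\<And>x y. E x y \<Longrightarrow> E y x" and sC: "\<sigma> \<in> cycle_covers V E"
  shows "inv \<sigma> \<in> cycle_covers V E"
proof -
  have sP: "\<sigma> permutes V" and sE: "\<And>u. u \<in> V \<Longrightarrow> \<sigma> u = u \<or> E u (\<sigma> u)"
    using sC by (auto simp: cycle_covers_def)
  have "\<forall>u\<in>V. inv \<sigma> u = u \<or> E u (inv \<sigma> u)"
  proof
    fix u assume uV: "u \<in> V"
    define w where "w = inv \<sigma> u"
    have wV: "w \<in> V" using permutes_in_image[OF permutes_inv[OF sP]] uV w_def by simp
    have sw: "\<sigma> w = u" using permutes_inverses[OF sP] w_def by simp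
    show "inv \<sigma> u = u \<or> E u (inv \<sigma> u)"
      using sE[OF wV] sw sym w_def by auto
  qed
  then show ?thesis using permutes_inv[OF sP] by (simp add: cycle_covers_def)
qed

theorem lemma4p1:
  fixes V :: "'a set" and E :: "'a \<Rightarrow> 'a \<Rightarrow> bool" and v wi wj :: 'a
  assumes "finite V"
    and "\<And>x y. E x y \<Longrightarrow> E y x"
    and "\<And>x y. E x y \<Longrightarrow> x \<in> V \<and> y \<in> V"
    and "v \<in> V" and "wi \<in> V" and "wj \<in> V"
    and "E v wi" and "E v wj"
    and "wi \<noteq> v" and "wj \<noteq> v" and "wi \<noteq> wj"
  shows "(real (card {\<sigma> \<in> cycle_covers V E. \<sigma> wi = v \<and> \<sigma> v = wj}))\<^sup>2
           \<le> 1/4 * (real (card {\<sigma> \<in> cycle_covers V E. \<sigma> v = v}))\<^sup>2"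
proof -
  note fin = assms(1) and sym = assms(2)
  have ab: "wj \<noteq> wi" using assms(11) by simp
  define CC where "CC = cycle_covers V E"
  define A where "A = {\<sigma> \<in> CC. \<sigma> wi = v \<and> \<sigma> v = wj}"
  define A' where "A' = {\<sigma> \<in> CC. \<sigma> wj = v \<and> \<sigma> v = wi}"
  define B where "B = {\<sigma> \<in> CC. \<sigma> v = v}"
  define Ba where "Ba = {\<tau> \<in> CC. \<tau> v = v \<and> \<tau> wj = wj}"
  define Bn where "Bn = {\<tau> \<in> CC. \<tau> v = v \<and> \<tau> wj \<noteq> wj}"
  have finCC: "finite CC"
    by (rule finite_subset[OF _ finite_permutations[OF fin]]) (auto simp: CC_def cycle_covers_def)
  have finA': "finite A'" "finite Ba" "finite Bn" "finite A"
    using finCC by (auto simp: A'_def Ba_def Bn_def A_def)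
  have cardAA': "card A \<le> card A'"
  proof (rule card_inj_on_le[of inv])
    show "inj_on inv A"
    proof (rule inj_onI)
      fix s t assume "s \<in> A" "t \<in> A" "inv s = inv t"
      moreover have "s permutes V" "t permutes V" using \<open>s \<in> A\<close> \<open>t \<in> A\<close>
        by (auto simp: A_def CC_def cycle_covers_def)
      ultimately show "s = t" using permutes_inv_inv by metis
    qed
    show "inv ` A \<subseteq> A'"
    proof
      fix t assume "t \<in> inv ` A"
      then obtain s where s: "s \<in> A" "t = inv s" by auto
      have sP: "s permutes V" using s by (auto simp: A_def CC_def cycle_covers_def)
      have "t \<in> CC" using inv_cover[OF sym] s by (auto simp: A_def CC_def)
      moreover have "t wj = v" "t v = wi" using s permutes_inv_eq[OF sP] by (auto simp: A_def)
      ultimately show "t \<in> A'" by (simp add: A'_def)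
    qed
    show "finite A'" by fact
  qed
  have cardPhi: "card (A \<times> A') \<le> card (Ba \<times> Bn)"
  proof (rule card_inj_on_le[of "Phi v wj wi"])
    show "inj_on (Phi v wj wi) (A \<times> A')"
    proof (rule inj_on_inverseI[where g = "Dec v wj wi"])
      fix pr assume "pr \<in> A \<times> A'"
      then obtain s t where st: "pr = (s, t)" "s \<in> A" "t \<in> A'" by auto
      have sC: "s \<in> cycle_covers V E" "s wi = v" "s v = wj" using st by (auto simp: A_def CC_def)
      have tC: "t \<in> cycle_covers V E" "t wj = v" "t v = wi" using st by (auto simp: A'_def CC_def)
      show "Dec v wj wi (Phi v wj wi pr) = pr"
        using key(3)[OF fin assms(4,6,5,10,9) ab sC tC] st(1) by simp
    qed
    show "Phi v wj wi ` (A \<times> A') \<subseteq> Ba \<times> Bn"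
    proof
      fix y assume "y \<in> Phi v wj wi ` (A \<times> A')"
      then obtain s t where st: "y = Phi v wj wi (s, t)" "s \<in> A" "t \<in> A'" by auto
      have sC: "s \<in> cycle_covers V E" "s wi = v" "s v = wj" using st by (auto simp: A_def CC_def)
      have tC: "t \<in> cycle_covers V E" "t wj = v" "t v = wi" using st by (auto simp: A'_def CC_def)
      have "fst y \<in> Ba" "snd y \<in> Bn"
        using key(1,2)[OF fin assms(4,6,5,10,9) ab sC tC] st(1)
        unfolding Ba_def Bn_def CC_def by simp_all
      then show "y \<in> Ba \<times> Bn" by (simp add: mem_Times_iff)
    qed
    show "finite (Ba \<times> Bn)" using finA' by simp
  qed
  have BU: "B = Ba \<union> Bn" "Ba \<inter> Bn = {}" by (auto simp: B_def Ba_def Bn_def)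
  have cardB: "card B = card Ba + card Bn" using BU finA' card_Un_disjoint by metis
  define x where "x = real (card A)"
  define y where "y = real (card A')"
  define s where "s = real (card Ba)"
  define t where "t = real (card Bn)"
  have h1: "x \<le> y" using cardAA' x_def y_def by simp
  have h2: "x * y \<le> s * t" using cardPhi x_def y_def s_def t_def
    by (simp add: card_cartesian_product of_nat_mult[symmetric] del: of_nat_mult)
  have h0: "0 \<le> x" using x_def by simp
  have "x\<^sup>2 \<le> x * y" using h0 h1 by (simp add: power2_eq_square mult_left_mono)
  also have "\<dots> \<le> s * t" by (rule h2)
  also have "\<dots> \<le> 1/4 * (s + t)\<^sup>2"
  proof -
    have "0 \<le> (s - t)\<^sup>2" by simp
    then show ?thesis by (simp add: power2_eq_square algebra_simps)
  qed
  finally have "x\<^sup>2 \<le> 1/4 * (s + t)\<^sup>2" .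
  moreover have "s + t = real (card B)" using cardB s_def t_def by simp
  ultimately show ?thesis unfolding x_def A_def B_def CC_def by simp
qed

end
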